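(* Let $K$ be a number field, $C/K$ a smooth projective absolutely irreducible curve of genus $\ge2$ with Jacobian $J$, and $P_0\in C(K)$. Let $L_0\subseteq J(K)$ be a subgroup of finite index $n=[J(K):L_0]$. Let $\upsilon_1,\dots,\upsilon_s$ be places of $K$ such that each $\upsilon=\upsilon_i$ is of good reduction for $C$ and $\gcd(n,\#J(k_\upsilon))=1$; write $k_i=k_{\upsilon_i}$. Define subgroups $L_0\supseteq L_1\supseteq\dots\supseteq L_s$ and finite subsets $W_0,\dots,W_s\subset L_0$ inductively: $W_0=\{0\}$; for $0\le i\le s-1$, $L_{i+1}$ is the kernel of the composition $L_i\hookrightarrow J(K)\xrightarrow{\mathrm{red}}J(k_{i+1})$; choose a complete set $\mathcal{Q}$ of coset representatives of $L_i/L_{i+1}$, put $W'_{i+1}=\{w+q: w\in W_i,\ q\in\mathcal{Q}\}$ and $W_{i+1}=\{w\in W'_{i+1}:\mathrm{red}(w)\in\jmath(C(k_{i+1}))\}$. Then for every $i\in\{0,\dots,s\}$ and every $Q\in C(K)$ there is $w\in W_i$ with $n(\jmath(Q)-w)\in L_i$.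
   Context: $k_\upsilon$ denotes the residue field of $K$ at $\upsilon$. For a place $\upsilon$ of good reduction, $\mathrm{red}$ denotes the natural reduction maps $C(K)\to C(k_\upsilon)$ and $J(K)\to J(k_\upsilon)$ (where $C$, $J$ over $k_\upsilon$ mean the reductions). $\jmath$ denotes the Abel–Jacobi map $C(K)\to J(K)$, $P\mapsto[P-P_0]$, and also the Abel–Jacobi map $C(k_\upsilon)\to J(k_\upsilon)$, $P\mapsto[P-\tilde P_0]$, with base point the reduction $\tilde P_0$ of $P_0$. *)

theory Defs
  imports "HOL-Algebra.Algebra"
begin

(* J(K) is modelled as a commutative group JK (HOL-Algebra,
   written multiplicatively: the paper's "+" is \<otimes>, "0" is \<one>, "n x" is x [^] n).
   The residue-field Jacobians J(k_i) are the groups Jk i, the reduction maps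
   J(K) \<rightarrow> J(k_i) are redJ i, C(K) is the set CK, C(k_i) is Ck i, the reduction
   maps on points are redC i, and the Abel--Jacobi maps are jK and jk i. *)

definition coset_reps :: "('a, 'b) monoid_scheme \<Rightarrow> 'a set \<Rightarrow> 'a set \<Rightarrow> 'a set \<Rightarrow> bool" where
  "coset_reps G H H' Q \<longleftrightarrow> Q \<subseteq> H \<and> (\<forall>x\<in>H. \<exists>!q. q \<in> Q \<and> x \<in> H' #>\<^bsub>G\<^esub> q)"

fun Lseq :: "(nat \<Rightarrow> ('c, 'd) monoid_scheme) \<Rightarrow> (nat \<Rightarrow> 'a \<Rightarrow> 'c) \<Rightarrow> 'a set \<Rightarrow> nat \<Rightarrow> 'a set" where
  "Lseq Jk redJ L0 0 = L0"
| "Lseq Jk redJ L0 (Suc i) = {x \<in> Lseq Jk redJ L0 i. redJ (Suc i) x = \<one>\<^bsub>Jk (Suc i)\<^esub>}"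

fun Wseq :: "('a, 'b) monoid_scheme \<Rightarrow> (nat \<Rightarrow> ('c, 'd) monoid_scheme) \<Rightarrow> (nat \<Rightarrow> 'a \<Rightarrow> 'c)
    \<Rightarrow> (nat \<Rightarrow> 'e \<Rightarrow> 'c) \<Rightarrow> (nat \<Rightarrow> 'e set) \<Rightarrow> (nat \<Rightarrow> 'a set) \<Rightarrow> nat \<Rightarrow> 'a set" where
  "Wseq JK Jk redJ jk Ck Qs 0 = {\<one>\<^bsub>JK\<^esub>}"
| "Wseq JK Jk redJ jk Ck Qs (Suc i) =
     {w. w \<in> {a \<otimes>\<^bsub>JK\<^esub> q | a q. a \<in> Wseq JK Jk redJ jk Ck Qs i \<and> q \<in> Qs i}
         \<and> redJ (Suc i) w \<in> jk (Suc i) ` Ck (Suc i)}"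

end

theory Submission
  imports Defs "HOL-Number_Theory.Cong"
begin

lemma sg_nat_pow_closed:
  assumes "subgroup H G" "x \<in> H"
  shows "x [^]\<^bsub>G\<^esub> (k::nat) \<in> H"
  by (induction k) (simp_all add: subgroup.one_closed[OF assms(1)] subgroup.m_closed[OF assms(1)] assms(2))

theorem lemma5p1:
  fixes JK :: "('a, 'b) monoid_scheme"
    and Jk :: "nat \<Rightarrow> ('c, 'd) monoid_scheme"
    and redJ :: "nat \<Rightarrow> 'a \<Rightarrow> 'c"
    and CK :: "'p set" and Ck :: "nat \<Rightarrow> 'e set"
    and redC :: "nat \<Rightarrow> 'p \<Rightarrow> 'e"
    and jK :: "'p \<Rightarrow> 'a" and jk :: "nat \<Rightarrow> 'e \<Rightarrow> 'c"
    and P0 :: 'p and L0 :: "'a set" and n s :: nat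
    and Qs :: "nat \<Rightarrow> 'a set"
  assumes JK_grp: "comm_group JK"
    and P0: "P0 \<in> CK"
    and jK_carrier: "jK ` CK \<subseteq> carrier JK"
    and jK_base: "jK P0 = \<one>\<^bsub>JK\<^esub>"
    and L0_sub: "subgroup L0 JK"
    and L0_index: "finite (rcosets\<^bsub>JK\<^esub> L0)" "n = card (rcosets\<^bsub>JK\<^esub> L0)"
    and Jk_grp: "\<And>i. i \<in> {1..s} \<Longrightarrow> comm_group (Jk i)"
    and Jk_fin: "\<And>i. i \<in> {1..s} \<Longrightarrow> finite (carrier (Jk i))"
    and Jk_coprime: "\<And>i. i \<in> {1..s} \<Longrightarrow> coprime n (card (carrier (Jk i)))"
    and redJ_hom: "\<And>i. i \<in> {1..s} \<Longrightarrow> redJ i \<in> hom JK (Jk i)"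
    and redC_into: "\<And>i. i \<in> {1..s} \<Longrightarrow> redC i ` CK \<subseteq> Ck i"
    and jk_carrier: "\<And>i. i \<in> {1..s} \<Longrightarrow> jk i ` Ck i \<subseteq> carrier (Jk i)"
    and jk_base: "\<And>i. i \<in> {1..s} \<Longrightarrow> jk i (redC i P0) = \<one>\<^bsub>Jk i\<^esub>"
    and red_compat: "\<And>i P. i \<in> {1..s} \<Longrightarrow> P \<in> CK \<Longrightarrow> redJ i (jK P) = jk i (redC i P)"
    and Qs_reps: "\<And>i. i < s \<Longrightarrow>
        coset_reps JK (Lseq Jk redJ L0 i) (Lseq Jk redJ L0 (Suc i)) (Qs i)"
  shows "\<forall>i \<le> s. \<forall>Q \<in> CK. \<exists>w \<in> Wseq JK Jk redJ jk Ck Qs i.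
           (jK Q \<otimes>\<^bsub>JK\<^esub> inv\<^bsub>JK\<^esub> w) [^]\<^bsub>JK\<^esub> n \<in> Lseq Jk redJ L0 i"
proof -
  interpret G: comm_group JK by (rule JK_grp)
  define L where "L = Lseq Jk redJ L0"
  define W where "W = Wseq JK Jk redJ jk Ck Qs"
  have Lsub: "subgroup (L i) JK" if "i \<le> s" for i
    using that
  proof (induction i)
    case 0 then show ?case using L0_sub by (simp add: L_def)
  next
    case (Suc i)
    have hom: "group_hom JK (Jk (Suc i)) (redJ (Suc i))"
      using Suc.prems Jk_grp[of "Suc i"] redJ_hom[of "Suc i"]
      by (simp add: group_hom_def group_hom_axioms_def comm_group_def G.is_group)
    have "L (Suc i) = L i \<inter> kernel JK (Jk (Suc i)) (redJ (Suc i))"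
      using subgroup.subset[OF Suc.IH] Suc.prems by (auto simp: L_def kernel_def)
    then show ?case using G.subgroups_Inter_pair Suc.IH Suc.prems group_hom.subgroup_kernel[OF hom]
      by simp
  qed
  have Qsub: "Qs i \<subseteq> L i" if "i < s" for i
    using Qs_reps[OF that] by (simp add: coset_reps_def L_def)
  have Wcar: "W i \<subseteq> carrier JK" if "i \<le> s" for i
    using that
  proof (induction i)
    case 0 then show ?case by (simp add: W_def)
  next
    case (Suc i)
    have "Qs i \<subseteq> carrier JK" using Qsub[of i] Suc.prems subgroup.subset[OF Lsub[of i]] by auto
    then show ?case using Suc by (auto simp: W_def)
  qed
  have base: "x [^]\<^bsub>JK\<^esub> n \<in> L0" if x: "x \<in> carrier JK" for x
  proof -
    interpret N: normal L0 JK using G.subgroup_imp_normal[OF L0_sub] .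
    interpret F: group "JK Mod L0" by (rule N.factorgroup_is_group)
    have xc: "L0 #>\<^bsub>JK\<^esub> x \<in> carrier (JK Mod L0)" using x by (simp add: carrier_FactGroup)
    have ord: "order (JK Mod L0) = n" using L0_index by (simp add: order_def FactGroup_def)
    have "(L0 #>\<^bsub>JK\<^esub> x) [^]\<^bsub>JK Mod L0\<^esub> n = L0"
      using F.pow_order_eq_1[OF xc] ord by simp
    then have "L0 #>\<^bsub>JK\<^esub> (x [^]\<^bsub>JK\<^esub> n) = L0" using N.FactGroup_pow[OF x] by simp
    then show ?thesis using G.rcos_self[OF _ L0_sub, of "x [^]\<^bsub>JK\<^esub> n"] x by simp
  qed
  have cop: "\<exists>a. g = (g [^]\<^bsub>Jk i\<^esub> n) [^]\<^bsub>Jk i\<^esub> (a::nat)"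
    if i: "i \<in> {1..s}" and g: "g \<in> carrier (Jk i)" for i g
  proof -
    interpret H: comm_group "Jk i" using Jk_grp[OF i] .
    define m where "m = card (carrier (Jk i))"
    have gm: "g [^]\<^bsub>Jk i\<^esub> m = \<one>\<^bsub>Jk i\<^esub>"
      using H.power_order_eq_one[OF Jk_fin[OF i] g] by (simp add: m_def)
    obtain a where a: "[n * a = 1] (mod m)"
      using cong_solve_coprime_nat[of n m] Jk_coprime[OF i] by (auto simp: m_def)
    have "(g [^]\<^bsub>Jk i\<^esub> n) [^]\<^bsub>Jk i\<^esub> a = g [^]\<^bsub>Jk i\<^esub> (n * a)"
      using g by (simp add: H.nat_pow_pow)
    also have "n * a = m * ((n*a) div m) + (n * a) mod m" by simp
    also have "g [^]\<^bsub>Jk i\<^esub> (m * ((n*a) div m) + (n * a) mod m) = g [^]\<^bsub>Jk i\<^esub> ((n * a) mod m)"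
    proof -
      have "\<And>k r. g [^]\<^bsub>Jk i\<^esub> (m * k + r) = g [^]\<^bsub>Jk i\<^esub> r"
        using g gm by (simp add: H.nat_pow_mult[symmetric] H.nat_pow_pow[symmetric])
      then show ?thesis by blast
    qed
    also have "(n * a) mod m = 1 mod m" using a by (simp add: cong_def)
    also have "g [^]\<^bsub>Jk i\<^esub> (1 mod m) = g"
    proof (cases "m = 1")
      case True then show ?thesis using gm g by simp
    next
      case False then show ?thesis using g by simp
    qed
    finally show ?thesis by metis
  qed
  have main: "\<forall>Q \<in> CK. \<exists>w \<in> W i. (jK Q \<otimes>\<^bsub>JK\<^esub> inv\<^bsub>JK\<^esub> w) [^]\<^bsub>JK\<^esub> n \<in> L i"
    if "i \<le> s" for i
    using that
  proof (induction i)
    case 0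
    show ?case
    proof
      fix Q assume Q: "Q \<in> CK"
      then have "jK Q \<in> carrier JK" using jK_carrier by auto
      then show "\<exists>w \<in> W 0. (jK Q \<otimes>\<^bsub>JK\<^esub> inv\<^bsub>JK\<^esub> w) [^]\<^bsub>JK\<^esub> n \<in> L 0"
        using base by (simp add: W_def L_def)
    qed
  next
    case (Suc i)
    have i1: "Suc i \<in> {1..s}" and iS: "i < s" using Suc.prems by auto
    interpret H: comm_group "Jk (Suc i)" using Jk_grp[OF i1] .
    have hom: "redJ (Suc i) \<in> hom JK (Jk (Suc i))" using redJ_hom[OF i1] .
    interpret RH: group_hom JK "Jk (Suc i)" "redJ (Suc i)"
      using hom by (simp add: group_hom_def group_hom_axioms_def G.is_group H.is_group)
    have LiS: "subgroup (L i) JK" using Lsub[of i] iS by simp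
    have LSS: "subgroup (L (Suc i)) JK" using Lsub[of "Suc i"] Suc.prems by simp
    have LSdef: "L (Suc i) = {x \<in> L i. redJ (Suc i) x = \<one>\<^bsub>Jk (Suc i)\<^esub>}" by (simp add: L_def)
    show ?case
    proof
      fix Q assume Q: "Q \<in> CK"
      obtain w where w: "w \<in> W i" and xw: "(jK Q \<otimes>\<^bsub>JK\<^esub> inv\<^bsub>JK\<^esub> w) [^]\<^bsub>JK\<^esub> n \<in> L i"
        using Suc.IH Q iS by auto
      have wc: "w \<in> carrier JK" using Wcar[of i] iS w by auto
      have jQ: "jK Q \<in> carrier JK" using jK_carrier Q by auto
      define x where "x = jK Q \<otimes>\<^bsub>JK\<^esub> inv\<^bsub>JK\<^esub> w"
      have xc: "x \<in> carrier JK" using wc jQ by (simp add: x_def)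
      define g where "g = redJ (Suc i) x"
      have gc: "g \<in> carrier (Jk (Suc i))" using xc by (simp add: g_def)
      obtain a where ga: "g = (g [^]\<^bsub>Jk (Suc i)\<^esub> n) [^]\<^bsub>Jk (Suc i)\<^esub> (a::nat)"
        using cop[OF i1 gc] by blast
      define y where "y = (x [^]\<^bsub>JK\<^esub> n) [^]\<^bsub>JK\<^esub> a"
      have yL: "y \<in> L i" using xw sg_nat_pow_closed[OF LiS] by (simp add: y_def x_def)
      have ry: "redJ (Suc i) y = g"
        using ga xc by (simp add: y_def g_def RH.hom_nat_pow)
      obtain q where q: "q \<in> Qs i" and yq: "y \<in> L (Suc i) #>\<^bsub>JK\<^esub> q"
        using Qs_reps[OF iS] yL by (auto simp: coset_reps_def L_def)
      have qL: "q \<in> L i" using Qsub[OF iS] q by auto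
      have qc: "q \<in> carrier JK" using qL subgroup.subset[OF LiS] by auto
      obtain l where l: "l \<in> L (Suc i)" and yl: "y = l \<otimes>\<^bsub>JK\<^esub> q"
        using yq by (auto simp: r_coset_def)
      have lc: "l \<in> carrier JK" using l subgroup.subset[OF LSS] by auto
      have rl: "redJ (Suc i) l = \<one>\<^bsub>Jk (Suc i)\<^esub>" using l LSdef by auto
      have rq: "redJ (Suc i) q = g" using ry yl lc qc rl by simp
      have rxq: "redJ (Suc i) (x \<otimes>\<^bsub>JK\<^esub> inv\<^bsub>JK\<^esub> q) = \<one>\<^bsub>Jk (Suc i)\<^esub>"
        using xc qc rq gc by (simp add: g_def RH.hom_inv)
      have eq: "jK Q \<otimes>\<^bsub>JK\<^esub> inv\<^bsub>JK\<^esub> (w \<otimes>\<^bsub>JK\<^esub> q) = x \<otimes>\<^bsub>JK\<^esub> inv\<^bsub>JK\<^esub> q"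
        using jQ wc qc by (simp add: x_def G.inv_mult G.m_ac)
      have p1: "(x \<otimes>\<^bsub>JK\<^esub> inv\<^bsub>JK\<^esub> q) [^]\<^bsub>JK\<^esub> n
               = x [^]\<^bsub>JK\<^esub> n \<otimes>\<^bsub>JK\<^esub> inv\<^bsub>JK\<^esub> (q [^]\<^bsub>JK\<^esub> n)"
        using xc qc by (simp add: G.nat_pow_distrib G.nat_pow_inv)
      have p1L: "(x \<otimes>\<^bsub>JK\<^esub> inv\<^bsub>JK\<^esub> q) [^]\<^bsub>JK\<^esub> n \<in> L i"
        unfolding p1 using xw qL sg_nat_pow_closed[OF LiS] subgroup.m_closed[OF LiS]
          subgroup.m_inv_closed[OF LiS] by (simp add: x_def)
      have p1r: "redJ (Suc i) ((x \<otimes>\<^bsub>JK\<^esub> inv\<^bsub>JK\<^esub> q) [^]\<^bsub>JK\<^esub> n) = \<one>\<^bsub>Jk (Suc i)\<^esub>"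
        using xc qc rxq by (simp add: RH.hom_nat_pow)
      have wq: "w \<otimes>\<^bsub>JK\<^esub> q \<in> W (Suc i)"
      proof -
        have "redJ (Suc i) (w \<otimes>\<^bsub>JK\<^esub> q) = redJ (Suc i) (jK Q)"
        proof -
          have "jK Q = x \<otimes>\<^bsub>JK\<^esub> w" using jQ wc by (simp add: x_def G.m_assoc)
          then have "redJ (Suc i) (jK Q) = g \<otimes>\<^bsub>Jk (Suc i)\<^esub> redJ (Suc i) w"
            using xc wc by (simp add: g_def)
          then show ?thesis using wc qc rq gc by (simp add: H.m_comm)
        qed
        also have "\<dots> = jk (Suc i) (redC (Suc i) Q)" using red_compat[OF i1 Q] .
        finally have "redJ (Suc i) (w \<otimes>\<^bsub>JK\<^esub> q) \<in> jk (Suc i) ` Ck (Suc i)"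
          using redC_into[OF i1] Q by auto
        then show ?thesis using w q by (auto simp: W_def)
      qed
      show "\<exists>w \<in> W (Suc i). (jK Q \<otimes>\<^bsub>JK\<^esub> inv\<^bsub>JK\<^esub> w) [^]\<^bsub>JK\<^esub> n \<in> L (Suc i)"
        using wq eq p1L p1r LSdef by auto
    qed
  qed
  show ?thesis using main by (simp add: L_def W_def)
qed

end
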